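(* Let $G \leq \mathrm{Aut}(K_{n,n})$ be a subgroup isomorphic to $A_4$. Suppose there is an embedding $\Gamma$ of $K_{n,n}$ in $S^3$ such that $G$ is induced on $\Gamma$ by an isomorphic subgroup $\widehat{G} \leq \mathrm{SO}(4)$. Let $n_2^v$ and $n_2^w$ denote the number of vertices of $V$, respectively of $W$, fixed by an element of order 2 of $G$ (these numbers are the same for all elements of order 2 of $G$). If $n_2^w = 0$, then $4$ divides $n_2^v$.
   Context: $K_{n,n}$ is the complete bipartite graph with vertex sets $V$, $W$ of $n$ vertices each; every vertex of $V$ is adjacent to every vertex of $W$, and there are no other edges. $S^3$ is the unit sphere in $\mathbb{R}^4$, on which $\mathrm{SO}(4)$ acts by isometries. "$G$ is induced on $\Gamma$ by an isomorphic subgroup $\widehat{G} \leq \mathrm{SO}(4)$" means every element of $\widehat{G}$ leaves $\Gamma$ setwise invariant, and restricting to $\Gamma$ gives an isomorphism from $\widehat{G}$ onto $G$. *)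

theory Defs
  imports "HOL-Analysis.Analysis" "HOL-Algebra.Sym_Groups"
begin

type_synonym vert = "nat + nat"

definition Vset :: "nat \<Rightarrow> vert set" where "Vset n = Inl ` {..<n}"
definition Wset :: "nat \<Rightarrow> vert set" where "Wset n = Inr ` {..<n}"
definition verts :: "nat \<Rightarrow> vert set" where "verts n = Vset n \<union> Wset n"

definition Kadj :: "nat \<Rightarrow> vert \<Rightarrow> vert \<Rightarrow> bool" where
  "Kadj n x y \<longleftrightarrow> (x \<in> Vset n \<and> y \<in> Wset n) \<or> (x \<in> Wset n \<and> y \<in> Vset n)"

definition Aut_K :: "nat \<Rightarrow> (vert \<Rightarrow> vert) set" where
  "Aut_K n = {f. bij_betw f (verts n) (verts n) \<and> (\<forall>x. x \<notin> verts n \<longrightarrow> f x = x)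
      \<and> (\<forall>x\<in>verts n. \<forall>y\<in>verts n. Kadj n (f x) (f y) \<longleftrightarrow> Kadj n x y)}"

definition AutK_group :: "nat \<Rightarrow> (vert \<Rightarrow> vert) monoid" where
  "AutK_group n = \<lparr>carrier = Aut_K n, mult = (\<circ>), one = id\<rparr>"

definition SO4 :: "(real^4^4) set" where
  "SO4 = {A. orthogonal_matrix A \<and> det A = 1}"

definition SO4_group :: "(real^4^4) monoid" where
  "SO4_group = \<lparr>carrier = SO4, mult = (**), one = mat 1\<rparr>"

definition K_embedding :: "nat \<Rightarrow> (vert \<Rightarrow> real^4) \<Rightarrow> (vert \<Rightarrow> vert \<Rightarrow> real \<Rightarrow> real^4) \<Rightarrow> bool" where
  "K_embedding n p \<gamma> \<longleftrightarrow>
     inj_on p (verts n) \<and> p ` verts n \<subseteq> sphere 0 1 \<and>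
     (\<forall>v\<in>Vset n. \<forall>w\<in>Wset n.
        arc (\<gamma> v w) \<and> pathstart (\<gamma> v w) = p v \<and> pathfinish (\<gamma> v w) = p w \<and>
        path_image (\<gamma> v w) \<subseteq> sphere 0 1 \<and>
        (\<forall>u\<in>verts n. p u \<in> path_image (\<gamma> v w) \<longrightarrow> u = v \<or> u = w) \<and>
        (\<forall>v'\<in>Vset n. \<forall>w'\<in>Wset n. (v, w) \<noteq> (v', w') \<longrightarrow>
            path_image (\<gamma> v w) \<inter> path_image (\<gamma> v' w') \<subseteq> p ` ({v, w} \<inter> {v', w'})))"

definition graph_image :: "nat \<Rightarrow> (vert \<Rightarrow> real^4) \<Rightarrow> (vert \<Rightarrow> vert \<Rightarrow> real \<Rightarrow> real^4) \<Rightarrow> (real^4) set" where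
  "graph_image n p \<gamma> = p ` verts n \<union> (\<Union>v\<in>Vset n. \<Union>w\<in>Wset n. path_image (\<gamma> v w))"

text \<open>Image of the edge {x,y} (unordered).\<close>
definition edge_img :: "nat \<Rightarrow> (vert \<Rightarrow> vert \<Rightarrow> real \<Rightarrow> real^4) \<Rightarrow> vert \<Rightarrow> vert \<Rightarrow> (real^4) set" where
  "edge_img n \<gamma> x y = (if x \<in> Vset n then path_image (\<gamma> x y) else path_image (\<gamma> y x))"

definition induced_by :: "nat \<Rightarrow> (vert \<Rightarrow> real^4) \<Rightarrow> (vert \<Rightarrow> vert \<Rightarrow> real \<Rightarrow> real^4)
    \<Rightarrow> (real^4^4) set \<Rightarrow> (vert \<Rightarrow> vert) set \<Rightarrow> (real^4^4 \<Rightarrow> vert \<Rightarrow> vert) \<Rightarrow> bool" where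
  "induced_by n p \<gamma> Gh G \<phi> \<longleftrightarrow>
     \<phi> \<in> iso (SO4_group\<lparr>carrier := Gh\<rparr>) (AutK_group n\<lparr>carrier := G\<rparr>) \<and>
     (\<forall>A\<in>Gh.
        (\<lambda>x. A *v x) ` graph_image n p \<gamma> = graph_image n p \<gamma> \<and>
        (\<forall>u\<in>verts n. A *v p u = p (\<phi> A u)) \<and>
        (\<forall>v\<in>Vset n. \<forall>w\<in>Wset n.
            (\<lambda>x. A *v x) ` path_image (\<gamma> v w) = edge_img n \<gamma> (\<phi> A v) (\<phi> A w)))"

end

theory Submission
  imports Defs
begin


definition tau3 :: "nat \<Rightarrow> nat" where
  "tau3 = (\<lambda>x. if x = 1 then 2 else if x = 2 then 3 else if x = 3 then 1 else x)"

lemma tau3_eq: "tau3 = Transposition.transpose 1 3 \<circ> Transposition.transpose 1 2"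
  by (auto simp: tau3_def Transposition.transpose_def fun_eq_iff)

lemma tau3_perm: "tau3 permutes {1..4}"
  unfolding tau3_eq by (intro permutes_compose permutes_swap_id) auto

lemma tau3_even: "evenperm tau3"
  unfolding tau3_eq by (subst evenperm_comp) (auto simp: permutation_swap_id evenperm_swap)

lemma tau3_cube: "tau3 \<circ> tau3 \<circ> tau3 = id"
  by (auto simp: tau3_def fun_eq_iff)

lemma A4_invol:
  assumes p: "g permutes {1..4::nat}" and e: "evenperm g" and ne: "g \<noteq> id" and inv: "g \<circ> g = id"
  shows "g \<circ> tau3 \<circ> g \<circ> tau3 \<circ> tau3 = tau3 \<circ> tau3 \<circ> g \<circ> tau3"
proof -
  have out: "\<And>x. x \<notin> {1..4} \<Longrightarrow> g x = x" using p by (simp add: permutes_not_in)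
  have gg: "\<And>x. g (g x) = x" using inv by (metis comp_apply id_apply)
  have inj: "\<And>x y. g x = g y \<Longrightarrow> x = y" by (metis gg)
  have r: "\<And>x. x \<in> {1..4} \<Longrightarrow> g x \<in> {1..4}" using permutes_in_image[OF p] by simp
  have v: "g 1 \<in> {1,2,3,4}" "g 2 \<in> {1,2,3,4}" "g 3 \<in> {1,2,3,4}" "g 4 \<in> {1,2,3,4}"
    using r[of 1] r[of 2] r[of 3] r[of 4] by auto
  have agree: "g = h" if "h permutes {1..4}" "g 1 = h 1" "g 2 = h 2" "g 3 = h 3" "g 4 = h 4" for h
  proof
    fix x show "g x = h x"
    proof (cases "x \<in> {1..4}")
      case True then have "x = 1 \<or> x = 2 \<or> x = 3 \<or> x = 4" by auto
      then show ?thesis using that by auto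
    next
      case False then show ?thesis using out that(1) by (simp add: permutes_not_in)
    qed
  qed
  have d: "g 1 \<noteq> g 2" "g 1 \<noteq> g 3" "g 1 \<noteq> g 4" "g 2 \<noteq> g 3" "g 2 \<noteq> g 4" "g 3 \<noteq> g 4"
    using inj[of 1 2] inj[of 1 3] inj[of 1 4] inj[of 2 3] inj[of 2 4] inj[of 3 4] by auto
  have T: "\<not> (g 1 = Transposition.transpose a b 1 \<and> g 2 = Transposition.transpose a b 2 \<and> g 3 = Transposition.transpose a b 3 \<and> g 4 = Transposition.transpose a b 4)"
    if "a \<in> {1..4}" "b \<in> {1..4}" "a \<noteq> b" for a b
    using agree[of "Transposition.transpose a b"] permutes_swap_id[OF that(1,2)] e evenperm_swap that(3) by metis
  have T12: "\<not> (g 1 = 2 \<and> g 2 = 1 \<and> g 3 = 3 \<and> g 4 = 4)" using T[of 1 2] by (simp add: Transposition.transpose_def)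
  have T13: "\<not> (g 1 = 3 \<and> g 2 = 2 \<and> g 3 = 1 \<and> g 4 = 4)" using T[of 1 3] by (simp add: Transposition.transpose_def)
  have T14: "\<not> (g 1 = 4 \<and> g 2 = 2 \<and> g 3 = 3 \<and> g 4 = 1)" using T[of 1 4] by (simp add: Transposition.transpose_def)
  have T23: "\<not> (g 1 = 1 \<and> g 2 = 3 \<and> g 3 = 2 \<and> g 4 = 4)" using T[of 2 3] by (simp add: Transposition.transpose_def)
  have T24: "\<not> (g 1 = 1 \<and> g 2 = 4 \<and> g 3 = 3 \<and> g 4 = 2)" using T[of 2 4] by (simp add: Transposition.transpose_def)
  have T34: "\<not> (g 1 = 1 \<and> g 2 = 2 \<and> g 3 = 4 \<and> g 4 = 3)" using T[of 3 4] by (simp add: Transposition.transpose_def)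
  have I: "\<not> (g 1 = 1 \<and> g 2 = 2 \<and> g 3 = 3 \<and> g 4 = 4)"
    using agree[of id] ne by auto
  have gg1: "g (g 1) = 1" "g (g 2) = 2" "g (g 3) = 3" "g (g 4) = 4" using gg by auto
  have cases: "(g 1 = 2 \<and> g 2 = 1 \<and> g 3 = 4 \<and> g 4 = 3) \<or> (g 1 = 3 \<and> g 2 = 4 \<and> g 3 = 1 \<and> g 4 = 2)
     \<or> (g 1 = 4 \<and> g 2 = 3 \<and> g 3 = 2 \<and> g 4 = 1)"
    using v gg1 d T12 T13 T14 T23 T24 T34 I
    apply -
    apply (elim insertE emptyE)
    apply simp_all
    done
  show ?thesis
  proof
    fix x
    show "(g \<circ> tau3 \<circ> g \<circ> tau3 \<circ> tau3) x = (tau3 \<circ> tau3 \<circ> g \<circ> tau3) x"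
    proof (cases "x \<in> {1..4}")
      case True then have "x = 1 \<or> x = 2 \<or> x = 3 \<or> x = 4" by auto
      then show ?thesis using cases by (auto simp: tau3_def)
    next
      case False
      then have "tau3 x = x" "g x = x" using out by (auto simp: tau3_def)
      then show ?thesis by simp
    qed
  qed
qed


lemma par_count:
  assumes "finite X" "\<forall>x\<in>X. s x \<in> X" "\<forall>x\<in>X. s (s x) = x"
  shows "even (card X + card {x\<in>X. s x = x})"
  using assms
proof (induction "card X" arbitrary: X rule: less_induct)
  case less
  show ?case
  proof (cases "X = {}")
    case True then show ?thesis by simp
  next
    case False
    then obtain x where x: "x \<in> X" by blast
    show ?thesis
    proof (cases "s x = x")
      case True
      let ?Y = "X - {x}"
      have Y1: "finite ?Y" using less.prems by auto
      have Y2: "\<forall>y\<in>?Y. s y \<in> ?Y"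
      proof
        fix y assume y: "y \<in> ?Y"
        have "s y \<noteq> x"
        proof
          assume "s y = x"
          then have "s (s y) = s x" by simp
          then show False using y True less.prems by auto
        qed
        then show "s y \<in> ?Y" using y less.prems by auto
      qed
      have Y3: "\<forall>y\<in>?Y. s (s y) = y" using less.prems by auto
      note Y = Y1 Y2 Y3
      have c: "card ?Y < card X" using card_Diff1_less[OF less.prems(1) x] .
      have e: "even (card ?Y + card {y\<in>?Y. s y = y})" using less.hyps[OF c Y] .
      have f: "{y\<in>X. s y = y} = insert x {y\<in>?Y. s y = y}" using True x by auto
      have "card {y\<in>X. s y = y} = Suc (card {y\<in>?Y. s y = y})"
        unfolding f using less.prems(1) by (subst card_insert_disjoint) auto
      moreover have "card X = Suc (card ?Y)" using x less.prems(1)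
        by (metis card_Suc_Diff1)
      ultimately show ?thesis using e by simp
    next
      case False
      let ?Y = "X - {x, s x}"
      have sx: "s x \<in> X" using less.prems x by auto
      have Y1: "finite ?Y" using less.prems by auto
      have Y2: "\<forall>y\<in>?Y. s y \<in> ?Y"
      proof
        fix y assume y: "y \<in> ?Y"
        have "s y \<noteq> x"
        proof
          assume "s y = x"
          then have "s (s y) = s x" by simp
          then show False using y less.prems by auto
        qed
        moreover have "s y \<noteq> s x"
        proof
          assume "s y = s x"
          then have "s (s y) = s (s x)" by simp
          then show False using y x less.prems by auto
        qed
        ultimately show "s y \<in> ?Y" using y less.prems by auto
      qed
      have Y3: "\<forall>y\<in>?Y. s (s y) = y" using less.prems by auto
      note Y = Y1 Y2 Y3
      have cY: "card X = card ?Y + 2"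
      proof -
        have "card ?Y = card X - card {x, s x}" using x sx less.prems(1) by (subst card_Diff_subset) auto
        moreover have "card {x, s x} = 2" using False by auto
        moreover have "card {x, s x} \<le> card X" using x sx less.prems(1) by (intro card_mono) auto
        ultimately show ?thesis by linarith
      qed
      have c: "card ?Y < card X" using cY by simp
      have e: "even (card ?Y + card {y\<in>?Y. s y = y})" using less.hyps[OF c Y] .
      have f: "{y\<in>X. s y = y} = {y\<in>?Y. s y = y}" using False less.prems x by auto
      show ?thesis using e f cY by simp
    qed
  qed
qed

lemma free4:
  assumes "finite X" "\<forall>x\<in>X. a x \<in> X" "\<forall>x\<in>X. b x \<in> X"
    "\<forall>x\<in>X. a (a x) = x" "\<forall>x\<in>X. b (b x) = x" "\<forall>x\<in>X. a (b x) = b (a x)"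
    "\<forall>x\<in>X. a x \<noteq> x" "\<forall>x\<in>X. b x \<noteq> x" "\<forall>x\<in>X. a (b x) \<noteq> x"
  shows "4 dvd card X"
  using assms
proof (induction "card X" arbitrary: X rule: less_induct)
  case less
  show ?case
  proof (cases "X = {}")
    case True then show ?thesis by simp
  next
    case False
    then obtain x where x: "x \<in> X" by blast
    let ?O = "{x, a x, b x, a (b x)}"
    let ?Y = "X - ?O"
    have ax: "a x \<in> X" and bx: "b x \<in> X" and abx: "a (b x) \<in> X" using less.prems x by auto
    have OX: "?O \<subseteq> X" using x ax bx abx by auto
    have d1: "x \<noteq> a x" "x \<noteq> b x" "x \<noteq> a (b x)" using less.prems x by auto
    have d2: "a x \<noteq> b x" using less.prems x by metis
    have d3: "a x \<noteq> a (b x)" using less.prems x bx by metis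
    have d4: "b x \<noteq> a (b x)" using less.prems x bx ax by metis
    have cO: "card ?O = 4" using d1 d2 d3 d4 by auto
    have cY: "card X = card ?Y + 4"
    proof -
      have "card ?Y = card X - card ?O" using OX less.prems(1) by (subst card_Diff_subset) (auto intro: finite_subset)
      moreover have "card ?O \<le> card X" using OX less.prems(1) by (intro card_mono) auto
      ultimately show ?thesis using cO by linarith
    qed
    have inv_a: "a y \<in> ?O \<longleftrightarrow> y \<in> ?O" if "y \<in> X" for y
      using less.prems that x bx by (auto; metis)
    have inv_b: "b y \<in> ?O \<longleftrightarrow> y \<in> ?O" if "y \<in> X" for y
      using less.prems that x bx ax by (auto; metis)
    have Y: "finite ?Y" "\<forall>y\<in>?Y. a y \<in> ?Y" "\<forall>y\<in>?Y. b y \<in> ?Y"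
      using less.prems inv_a inv_b by auto
    have c: "card ?Y < card X" using cY by simp
    have "4 dvd card ?Y"
      by (rule less.hyps[OF c Y]) (use less.prems in auto)
    then show ?thesis using cY by simp
  qed
qed

lemma arith4: "X = r + N + 2*(N-k) \<Longrightarrow> even (N+k) \<Longrightarrow> k \<le> N \<Longrightarrow> 4 dvd r \<Longrightarrow> 4 dvd X \<Longrightarrow> 4 dvd (N::nat)"
proof -
  assume h: "X = r + N + 2*(N-k)" "even (N+k)" "k \<le> N" "4 dvd r" "4 dvd X"
  obtain j where j: "N = k + j" using h(3) le_Suc_ex by blast
  obtain r' where r: "r = 4*r'" using h(4) by blast
  obtain x' where x: "X = 4*x'" using h(5) by blast
  obtain m where m: "N + k = 2*m" using h(2) by blast
  have "4*x' = 4*r' + k + j + 2*j" using h(1) j r x by simp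
  then show ?thesis using j m by presburger
qed

lemma count_main:
  assumes fin: "finite X" and ma: "\<forall>x\<in>X. a x \<in> X" and mb: "\<forall>x\<in>X. b x \<in> X"
    and ia: "\<forall>x\<in>X. a (a x) = x" and ib: "\<forall>x\<in>X. b (b x) = x" and cm: "\<forall>x\<in>X. a (b x) = b (a x)"
    and cB: "card {x\<in>X. b x = x} = card {x\<in>X. a x = x}"
    and cC: "card {x\<in>X. a (b x) = x} = card {x\<in>X. a x = x}"
    and d4: "4 dvd card X"
  shows "4 dvd card {x\<in>X. a x = x}"
proof -
  define A where "A = {x\<in>X. a x = x}"
  define B where "B = {x\<in>X. b x = x}"
  define C where "C = {x\<in>X. a (b x) = x}"
  define D where "D = A \<inter> B"
  define R where "R = X - (A \<union> B \<union> C)"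
  have fA: "finite A" "finite B" "finite C" "finite D" using fin by (auto simp: A_def B_def C_def D_def)
  have BA: "B \<inter> A = D" using D_def by auto
  have CAB: "C \<inter> (A \<union> B) = D" unfolding A_def B_def C_def D_def using ia ib cm by auto
  have DA: "D \<subseteq> A" using D_def by auto
  have Rd: "x \<in> R \<longleftrightarrow> x \<in> X \<and> a x \<noteq> x \<and> b x \<noteq> x \<and> a (b x) \<noteq> x" for x
    by (auto simp: R_def A_def B_def C_def)
  have Ra: "a x \<in> R" if "x \<in> R" for x
  proof -
    have x: "x \<in> X" "a x \<noteq> x" "b x \<noteq> x" "a (b x) \<noteq> x" using that Rd by auto
    have 1: "a x \<in> X" using ma x by auto
    have 2: "a (a x) \<noteq> a x" using ia x by auto
    have 3: "b (a x) \<noteq> a x"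
    proof
      assume "b (a x) = a x"
      then have "a (b x) = a x" using cm x by auto
      then have "a (a (b x)) = a (a x)" by simp
      then show False using ia mb x by auto
    qed
    have 4: "a (b (a x)) \<noteq> a x"
    proof
      assume "a (b (a x)) = a x"
      then have "a (a (b x)) = a x" using cm x by auto
      then have "b x = a x" using ia mb x by auto
      then have "a (b x) = x" using ia x by auto
      then show False using x by auto
    qed
    show ?thesis using Rd 1 2 3 4 by auto
  qed
  have Rb: "b x \<in> R" if "x \<in> R" for x
  proof -
    have x: "x \<in> X" "a x \<noteq> x" "b x \<noteq> x" "a (b x) \<noteq> x" using that Rd by auto
    have 1: "b x \<in> X" using mb x by auto
    have 2: "b (b x) \<noteq> b x" using ib x by auto
    have 3: "a (b x) \<noteq> b x"
    proof
      assume "a (b x) = b x"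
      then have "b (a x) = b x" using cm x by auto
      then have "b (b (a x)) = b (b x)" by simp
      then show False using ib ma x by auto
    qed
    have 4: "a (b (b x)) \<noteq> b x"
    proof
      assume "a (b (b x)) = b x"
      then have "a x = b x" using ib x by auto
      then have "a (b x) = x" using ia x by metis
      then show False using x by auto
    qed
    show ?thesis using Rd 1 2 3 4 by auto
  qed
  have "4 dvd card R"
  proof (rule free4[of R a b])
    have RX: "R \<subseteq> X" by (auto simp: R_def)
    show "finite R" using fin RX finite_subset by auto
    show "\<forall>x\<in>R. a x \<in> R" "\<forall>x\<in>R. b x \<in> R" using Ra Rb by auto
    show "\<forall>x\<in>R. a (a x) = x" "\<forall>x\<in>R. b (b x) = x" "\<forall>x\<in>R. a (b x) = b (a x)"
      using ia ib cm RX by auto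
    show "\<forall>x\<in>R. a x \<noteq> x" "\<forall>x\<in>R. b x \<noteq> x" "\<forall>x\<in>R. a (b x) \<noteq> x"
      using Rd by auto
  qed
  have par: "even (card A + card D)"
  proof -
    have "even (card A + card {x\<in>A. b x = x})"
      by (rule par_count) (use fA ib mb cm in \<open>auto simp: A_def\<close>)
    moreover have "{x\<in>A. b x = x} = D" by (auto simp: D_def B_def A_def)
    ultimately show ?thesis by simp
  qed
  have U: "A \<union> B \<union> C = A \<union> (B - A) \<union> (C - (A \<union> B))" by auto
  have cU: "card (A \<union> B \<union> C) = card A + (card B - card D) + (card C - card D)"
  proof -
    have "card (A \<union> (B - A) \<union> (C - (A \<union> B))) = card (A \<union> (B - A)) + card (C - (A \<union> B))"
      using fA by (intro card_Un_disjoint) auto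
    moreover have "card (A \<union> (B - A)) = card A + card (B - A)" using fA by (intro card_Un_disjoint) auto
    moreover have "card (B - A) = card B - card D" using fA BA by (simp add: card_Diff_subset_Int)
    moreover have "card (C - (A \<union> B)) = card C - card D" using fA CAB by (simp add: card_Diff_subset_Int)
    moreover have "card (A \<union> B \<union> C) = card (A \<union> (B - A) \<union> (C - (A \<union> B)))"
      using arg_cong[OF U, of card] .
    ultimately show ?thesis by linarith
  qed
  have cX: "card X = card R + card (A \<union> B \<union> C)"
  proof -
    have "A \<union> B \<union> C \<subseteq> X" by (auto simp: A_def B_def C_def)
    moreover have "finite (A \<union> B \<union> C)" using fA by auto
    ultimately have "card R = card X - card (A \<union> B \<union> C)" "card (A \<union> B \<union> C) \<le> card X"
      unfolding R_def using fin by (auto simp: card_Diff_subset card_mono)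
    then show ?thesis by linarith
  qed
  have kle: "card D \<le> card A" using fA DA by (simp add: card_mono)
  have "card B = card A" "card C = card A" using cB cC by (auto simp: A_def B_def C_def)
  then have "card X = card R + card A + 2 * (card A - card D)" using cX cU by simp
  then have "4 dvd card A" using par kle \<open>4 dvd card R\<close> d4 arith4 by blast
  then show ?thesis by (simp add: A_def)
qed


lemma VW_disj: "Vset n \<inter> Wset n = {}" by (auto simp: Vset_def Wset_def)

lemma side:
  assumes f: "f \<in> Aut_K n"
  shows "((\<forall>x\<in>Vset n. f x \<in> Vset n) \<and> (\<forall>x\<in>Wset n. f x \<in> Wset n)) \<or>
         ((\<forall>x\<in>Vset n. f x \<in> Wset n) \<and> (\<forall>x\<in>Wset n. f x \<in> Vset n))"
proof (cases "n = 0")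
  case True then show ?thesis by (simp add: Vset_def Wset_def)
next
  case False
  let ?v = "Inl 0 :: vert"
  have v: "?v \<in> Vset n" using False by (simp add: Vset_def)
  have bij: "bij_betw f (verts n) (verts n)" and adj: "\<forall>x\<in>verts n. \<forall>y\<in>verts n. Kadj n (f x) (f y) \<longleftrightarrow> Kadj n x y"
    using f by (auto simp: Aut_K_def)
  have inv: "f x \<in> Vset n \<union> Wset n" if "x \<in> Vset n \<union> Wset n" for x
    using bij that unfolding verts_def bij_betw_def by auto
  have K: "Kadj n (f x) (f y) \<longleftrightarrow> Kadj n x y" if "x \<in> Vset n \<union> Wset n" "y \<in> Vset n \<union> Wset n" for x y
    using adj that unfolding verts_def by auto
  have D: "a \<in> Vset n \<Longrightarrow> a \<notin> Wset n" for a using VW_disj by auto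
  have fv: "f ?v \<in> Vset n \<union> Wset n" using inv v by auto
  show ?thesis
  proof (cases "f ?v \<in> Vset n")
    case True
    have "\<forall>x\<in>Vset n. f x \<in> Vset n"
    proof
      fix x assume x: "x \<in> Vset n"
      have "\<not> Kadj n ?v x" using x v D by (auto simp: Kadj_def)
      then have "\<not> Kadj n (f ?v) (f x)" using K x v by auto
      then show "f x \<in> Vset n" using True inv[of x] x by (auto simp: Kadj_def)
    qed
    moreover have "\<forall>x\<in>Wset n. f x \<in> Wset n"
    proof
      fix x assume x: "x \<in> Wset n"
      have "Kadj n ?v x" using x v by (auto simp: Kadj_def)
      then have "Kadj n (f ?v) (f x)" using K x v by auto
      then show "f x \<in> Wset n" using True D by (auto simp: Kadj_def)
    qed
    ultimately show ?thesis by auto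
  next
    case False
    then have Tw: "f ?v \<in> Wset n" using fv by auto
    have DW: "a \<in> Wset n \<Longrightarrow> a \<notin> Vset n" for a using VW_disj by auto
    have "\<forall>x\<in>Vset n. f x \<in> Wset n"
    proof
      fix x assume x: "x \<in> Vset n"
      have "\<not> Kadj n ?v x" using x v D by (auto simp: Kadj_def)
      then have "\<not> Kadj n (f ?v) (f x)" using K x v by auto
      then show "f x \<in> Wset n" using Tw inv[of x] x by (auto simp: Kadj_def)
    qed
    moreover have "\<forall>x\<in>Wset n. f x \<in> Vset n"
    proof
      fix x assume x: "x \<in> Wset n"
      have "Kadj n ?v x" using x v by (auto simp: Kadj_def)
      then have "Kadj n (f ?v) (f x)" using K x v by auto
      then show "f x \<in> Vset n" using Tw DW by (auto simp: Kadj_def)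
    qed
    ultimately show ?thesis by auto
  qed
qed

lemma conj_card:
  assumes tt: "\<And>x. t (t (t x)) = x" and tS: "\<forall>x\<in>S. t x \<in> S"
  shows "card {x\<in>S. t (h (t (t x))) = x} = card {x\<in>S. h x = x}"
proof -
  have aux: "h (t (t y)) = t (t y)" if "t (h (t (t y))) = y" for y
  proof -
    have "t (t (t (h (t (t y))))) = t (t y)" using that by simp
    then show ?thesis using tt by simp
  qed
  have "bij_betw t {x\<in>S. h x = x} {x\<in>S. t (h (t (t x))) = x}"
    by (rule bij_betw_byWitness[where f' = "\<lambda>y. t (t y)"]) (use tt tS aux in auto)
  then show ?thesis by (simp add: bij_betw_same_card)
qed

theorem lemma5:
  fixes n :: nat and G :: "(vert \<Rightarrow> vert) set"
  assumes "subgroup G (AutK_group n)"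
    and "AutK_group n\<lparr>carrier := G\<rparr> \<cong> alt_group 4"
    and "\<exists>p \<gamma> Gh \<phi>. K_embedding n p \<gamma> \<and> subgroup Gh SO4_group \<and> induced_by n p \<gamma> Gh G \<phi>"
  shows "\<forall>g\<in>G. (g \<noteq> id \<and> g \<circ> g = id) \<longrightarrow>
           card {w\<in>Wset n. g w = w} = 0 \<longrightarrow> 4 dvd card {v\<in>Vset n. g v = v}"
proof (intro ballI impI, elim conjE)
  fix g assume gG: "g \<in> G" and gne: "g \<noteq> id" and ginv: "g \<circ> g = id"
    and W0: "card {w\<in>Wset n. g w = w} = 0"
  have GA: "G \<subseteq> Aut_K n" using subgroup.subset[OF assms(1)] by (simp add: AutK_group_def)
  have mc: "x \<circ> y \<in> G" if "x \<in> G" "y \<in> G" for x y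
    using subgroup.m_closed[OF assms(1) that] by (simp add: AutK_group_def)
  have idG: "id \<in> G" using subgroup.one_closed[OF assms(1)] by (simp add: AutK_group_def)
  obtain \<psi> where psi: "\<psi> \<in> iso (AutK_group n\<lparr>carrier := G\<rparr>) (alt_group 4)"
    using assms(2) unfolding is_iso_def by blast
  have A4c: "carrier (alt_group 4) = {p. p permutes {1..4} \<and> evenperm p}"
    by (simp add: alt_group_def)
  have Pi: "\<psi> x \<in> carrier (alt_group 4)" if "x \<in> G" for x
    using psi that by (auto simp: iso_def hom_def AutK_group_def)
  have hm: "\<psi> (x \<circ> y) = \<psi> x \<circ> \<psi> y" if "x \<in> G" "y \<in> G" for x y
    using psi that by (auto simp: iso_def hom_def AutK_group_def alt_group_def sym_group_def)
  have bj: "bij_betw \<psi> G (carrier (alt_group 4))"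
    using psi by (auto simp: iso_def AutK_group_def)
  have injp: "x = y" if "x \<in> G" "y \<in> G" "\<psi> x = \<psi> y" for x y
    using bj that unfolding bij_betw_def inj_on_def by blast
  have pid: "\<psi> id = id"
  proof -
    have pe: "\<psi> id permutes {1..4}" using Pi[OF idG] A4c by auto
    have "\<psi> id \<circ> \<psi> id = \<psi> id" using hm[OF idG idG] by simp
    then have "\<psi> id (\<psi> id x) = \<psi> id x" for x by (metis comp_apply)
    then show ?thesis using permutes_inj[OF pe] by (auto simp: inj_def fun_eq_iff)
  qed
  have pg: "\<psi> g permutes {1..4}" "evenperm (\<psi> g)" using Pi[OF gG] A4c by auto
  have pgg: "\<psi> g \<circ> \<psi> g = id" using hm[OF gG gG] ginv pid by simp
  have pgne: "\<psi> g \<noteq> id" using injp[OF gG idG] pid gne by auto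
  have E: "\<psi> g \<circ> tau3 \<circ> \<psi> g \<circ> tau3 \<circ> tau3 = tau3 \<circ> tau3 \<circ> \<psi> g \<circ> tau3"
    using A4_invol[OF pg pgne pgg] .
  have "tau3 \<in> \<psi> ` G" using bj tau3_perm tau3_even A4c unfolding bij_betw_def by auto
  then obtain t where tG: "t \<in> G" and pt: "\<psi> t = tau3" by auto
  have "\<psi> (t \<circ> t \<circ> t) = \<psi> id" using hm tG mc pt pid tau3_cube by simp
  then have ttt: "t \<circ> t \<circ> t = id" by (rule injp[rotated 2]) (simp_all add: mc tG idG)
  have "\<psi> (g \<circ> t \<circ> g \<circ> t \<circ> t) = \<psi> (t \<circ> t \<circ> g \<circ> t)" using hm tG gG mc pt E by simp
  then have gE: "g \<circ> t \<circ> g \<circ> t \<circ> t = t \<circ> t \<circ> g \<circ> t" by (rule injp[rotated 2]) (simp_all add: mc tG gG)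
  have tt: "t (t (t x)) = x" for x using ttt by (metis comp_apply id_apply)
  have gg: "g (g x) = x" for x using ginv by (metis comp_apply id_apply)
  have gbc: "g (t (g (t (t x)))) = t (t (g (t x)))" for x using gE by (metis comp_apply)
  show "4 dvd card {v\<in>Vset n. g v = v}"
  proof (cases "{v\<in>Vset n. g v = v} = {}")
    case True then show ?thesis by (metis card.empty dvd_0_right)
  next
    case False
    then obtain v0 where v0: "v0 \<in> Vset n" "g v0 = v0" by auto
    have tV: "(\<forall>x\<in>Vset n. t x \<in> Vset n) \<and> (\<forall>x\<in>Wset n. t x \<in> Wset n)"
    proof -
      have "\<not> ((\<forall>x\<in>Vset n. t x \<in> Wset n) \<and> (\<forall>x\<in>Wset n. t x \<in> Vset n))"
      proof
        assume h: "(\<forall>x\<in>Vset n. t x \<in> Wset n) \<and> (\<forall>x\<in>Wset n. t x \<in> Vset n)"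
        then have "t (t (t v0)) \<in> Wset n" using v0 by auto
        then show False using tt v0 VW_disj by auto
      qed
      then show ?thesis using side[of t n] GA tG by auto
    qed
    have gV: "(\<forall>x\<in>Vset n. g x \<in> Vset n) \<and> (\<forall>x\<in>Wset n. g x \<in> Wset n)"
    proof -
      have "g v0 \<notin> Wset n" using v0 VW_disj by auto
      moreover have "g \<in> Aut_K n" using GA gG by auto
      ultimately show ?thesis using side[of g n] v0 by metis
    qed
    define b where "b x = t (g (t (t x)))" for x
    have bb: "b (b x) = x" for x by (simp add: b_def tt gg)
    have gb: "g (b y) = t (t (g (t y)))" for y by (simp add: b_def gbc)
    have cc: "g (b (g (b x))) = x" for x by (simp add: gb tt gg)
    have cm: "g (b x) = b (g x)" for x
      using cc[of "b (g x)"] bb gg by simp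
    have cb: "t (b (t (t x))) = g (b x)" for x by (subst gb) (simp add: b_def tt)
    have bS: "\<forall>x\<in>S. b x \<in> S" if "\<forall>x\<in>S. t x \<in> S" "\<forall>x\<in>S. g x \<in> S" for S
      using that by (simp add: b_def)
    have cB: "card {x\<in>S. b x = x} = card {x\<in>S. g x = x}" if "\<forall>x\<in>S. t x \<in> S" for S
      using conj_card[of t S g, OF tt that] by (simp add: b_def)
    have cC: "card {x\<in>S. g (b x) = x} = card {x\<in>S. b x = x}" if "\<forall>x\<in>S. t x \<in> S" for S
      using conj_card[of t S b, OF tt that] by (simp add: cb)
    have finW: "finite (Wset n)" "finite (Vset n)" by (auto simp: Wset_def Vset_def)
    have cardW: "card (Wset n) = n" "card (Vset n) = n"
      by (auto simp: Wset_def Vset_def card_image)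
    have e1: "{w\<in>Wset n. g w = w} = {}" using W0 finW by simp
    have e2: "{w\<in>Wset n. b w = w} = {}" using cB[of "Wset n"] tV W0 finW by simp
    have e3: "{w\<in>Wset n. g (b w) = w} = {}" using cC[of "Wset n"] cB[of "Wset n"] tV W0 finW by simp
    have "4 dvd card (Wset n)"
    proof (rule free4[of "Wset n" g b])
      show "\<forall>x\<in>Wset n. g x \<noteq> x" "\<forall>x\<in>Wset n. b x \<noteq> x" "\<forall>x\<in>Wset n. g (b x) \<noteq> x"
        using e1 e2 e3 by blast+
    qed (use finW gV tV bS gg bb cm in auto)
    then have d4: "4 dvd card (Vset n)" using cardW by simp
    show ?thesis
    proof (rule count_main[of "Vset n" g b])
      show "card {x\<in>Vset n. b x = x} = card {x\<in>Vset n. g x = x}" using cB tV by auto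
      show "card {x\<in>Vset n. g (b x) = x} = card {x\<in>Vset n. g x = x}"
        using cC[of "Vset n"] cB[of "Vset n"] tV by auto
    qed (use finW gV tV bS gg bb cm d4 in auto)
  qed
qed
end
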